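(* Let $k\in\mathbb{N}$ with $\gcd(k,6)=1$, let $h$ be an integer with $\gcd(h,k)=1$, and let $h'$ be an integer with $hh'\equiv-1\pmod{k}$ and $6\mid h'$. Then $$\frac{\omega_{6h,k}\,\omega_{2h,k}\,\omega_{h,k}}{\omega_{3h,k}}=\exp\!\left(- \frac{2\pi i}{36k} \left(-9k+9k^2+h (-9+9k^2) + h'(2-2k^2) \right)\right)$$ and $$\frac{\omega_{3h,k}\,\omega_{2h,k}\,\omega_{h,k}}{\omega_{6h,k}^3} =\exp\!\left(\frac{2\pi i}{18k} \left(9h ( k^2-1) + h'(k^2-1) \right)\right).$$
   Context: For coprime integers $h$ and $K\ge1$, $\omega_{h,K}=\exp(\pi i\, s(h,K))$, where $s(h,K)=\sum_{r=1}^{K-1}\frac{r}{K}\left(\frac{hr}{K}-\lfloor \frac{hr}{K}\rfloor-\frac12\right)$ is the Dedekind sum (the multiplier of the Dedekind eta function). *)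

theory Defs
  imports "HOL-Analysis.Analysis" "HOL-Number_Theory.Cong"
begin

definition dedekind_sum :: "int \<Rightarrow> int \<Rightarrow> real" where
  "dedekind_sum h K = (\<Sum>r\<in>{1..K-1}.
     (of_int r / of_int K) * (of_int (h*r) / of_int K - of_int \<lfloor>of_int (h*r) / (of_int K :: real)\<rfloor> - 1/2))"

definition omega :: "int \<Rightarrow> int \<Rightarrow> complex" where
  "omega h K = exp (complex_of_real pi * \<i> * complex_of_real (dedekind_sum h K))"

end

theory Submission
  imports Defs
begin


definition Asum :: "int \<Rightarrow> int \<Rightarrow> int" where
  "Asum a K = (\<Sum>r\<in>{1..K-1}. r * (a*r mod K))"

lemma perm_bij:
  fixes K a :: int assumes K: "K > 0" and cop: "coprime a K"
  shows "bij_betw (\<lambda>r. a*r mod K) {1..K-1} {1..K-1}"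
proof -
  have sub: "(\<lambda>r. a*r mod K) ` {1..K-1} \<subseteq> {1..K-1}"
  proof
    fix y assume "y \<in> (\<lambda>r. a*r mod K) ` {1..K-1}"
    then obtain r where r: "r \<in> {1..K-1}" "y = a*r mod K" by auto
    have "\<not> K dvd r" using r(1) by (auto simp: zdvd_not_zless)
    hence "\<not> K dvd a*r" using cop by (metis coprime_commute coprime_dvd_mult_right_iff)
    hence "y \<noteq> 0" using r(2) by auto
    moreover have "0 \<le> y" "y < K" using r(2) K by auto
    ultimately show "y \<in> {1..K-1}" by auto
  qed
  have inj: "inj_on (\<lambda>r. a*r mod K) {1..K-1}"
  proof
    fix x y assume xy: "x \<in> {1..K-1}" "y \<in> {1..K-1}" "a*x mod K = a*y mod K"
    hence "K dvd a*x - a*y" by (metis mod_eq_dvd_iff)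
    hence "K dvd a*(x-y)" by (simp add: right_diff_distrib)
    hence d: "K dvd x - y" using cop by (metis coprime_commute coprime_dvd_mult_right_iff)
    have "\<bar>x - y\<bar> < K" using xy by auto
    show "x = y" proof (rule ccontr)
      assume "x \<noteq> y"
      hence "\<bar>K\<bar> \<le> \<bar>x - y\<bar>" using dvd_imp_le_int[OF _ d] by simp
      thus False using \<open>\<bar>x - y\<bar> < K\<close> by simp
    qed
  qed
  have "(\<lambda>r. a*r mod K) ` {1..K-1} = {1..K-1}" using endo_inj_surj[OF _ sub inj] by simp
  thus ?thesis using inj by (simp add: bij_betw_def)
qed

lemma perm_sum:
  fixes K a :: int assumes "K > 0" and "coprime a K"
  shows "(\<Sum>r\<in>{1..K-1}. f (a*r mod K)) = (\<Sum>x\<in>{1..K-1}. f x)"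
  using sum.reindex_bij_betw[OF perm_bij[OF assms]] .

lemma sum_sq_int: "6 * (\<Sum>r\<in>{1..int n}. r^2) = int n * (int n + 1) * (2 * int n + 1)"
proof (induction n)
  case 0 then show ?case by simp
next
  case (Suc n)
  have "{1..int (Suc n)} = insert (int n + 1) {1..int n}" by auto
  then show ?case using Suc by (simp add: algebra_simps power2_eq_square)
qed

lemma sum_lin_int: "2 * (\<Sum>r\<in>{1..int n}. r) = int n * (int n + 1)"
proof (induction n)
  case 0 then show ?case by simp
next
  case (Suc n)
  have "{1..int (Suc n)} = insert (int n + 1) {1..int n}" by auto
  then show ?case using Suc by (simp add: algebra_simps)
qed

lemma sum_sq_K: fixes K :: int assumes "K > 0"
  shows "6 * (\<Sum>r\<in>{1..K-1}. r^2) = (K-1)*K*(2*K-1)"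
proof -
  obtain n where n: "K - 1 = int n" using assms by (metis zero_le_imp_eq_int zle_diff1_eq int_one_le_iff_zero_less)
  show ?thesis using sum_sq_int[of n] n by (simp add: algebra_simps)
qed

lemma sum_lin_K: fixes K :: int assumes "K > 0"
  shows "2 * (\<Sum>r\<in>{1..K-1}. r) = (K-1)*K"
proof -
  obtain n where n: "K - 1 = int n" using assms by (metis zero_le_imp_eq_int zle_diff1_eq int_one_le_iff_zero_less)
  show ?thesis using sum_lin_int[of n] n by (simp add: algebra_simps)
qed





lemma A_cong:
  fixes K a a' :: int assumes K: "K > 0" and cop: "coprime a K" and c: "[a*a' = -1] (mod K)"
  shows "K^2 dvd 12 * Asum a K - K*(a - a')"
proof -
  define x where "x r = a*r mod K" for r
  define q where "q r = a*r div K" for r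
  define S2 where "S2 = (\<Sum>r\<in>{1..K-1}. r^2)"
  define Q where "Q = (\<Sum>r\<in>{1..K-1}. r * q r)"
  define W where "W = (\<Sum>r\<in>{1..K-1}. (q r)^2)"
  have ar: "x r = a*r - K * q r" for r unfolding x_def q_def by (metis minus_mult_div_eq_mod mult.commute)
  have perm: "(\<Sum>r\<in>{1..K-1}. (x r)^2) = S2"
    unfolding x_def S2_def using perm_sum[OF K cop, of "\<lambda>x. x^2"] by simp
  have "(\<Sum>r\<in>{1..K-1}. (x r)^2) = (\<Sum>r\<in>{1..K-1}. a^2 * r^2 - 2*a*K*(r * q r) + K^2 * (q r)^2)"
    by (rule sum.cong) (auto simp: ar power2_eq_square algebra_simps)
  also have "\<dots> = a^2*S2 - 2*a*K*Q + K^2*W"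
    by (simp add: S2_def Q_def W_def sum.distrib sum_subtractf sum_distrib_left)
  finally have h3: "a^2*S2 - 2*a*K*Q + K^2*W = S2" using perm by simp
  have "Asum a K = (\<Sum>r\<in>{1..K-1}. a * r^2 - K*(r * q r))"
    unfolding Asum_def x_def[symmetric]
    by (rule sum.cong) (auto simp: ar power2_eq_square algebra_simps)
  also have "\<dots> = a*S2 - K*Q"
    by (simp add: S2_def Q_def sum_subtractf sum_distrib_left)
  finally have h4: "Asum a K = a*S2 - K*Q" .
  have h2: "6 * S2 = (K-1)*K*(2*K-1)" unfolding S2_def using sum_sq_K[OF K] .
  obtain e where h1: "a*a' = K*e - 1"
    using c by (metis cong_iff_dvd_diff diff_minus_eq_add dvd_def eq_diff_eq)
  have key: "a*(12 * Asum a K - K*(a - a')) = K^2*((a^2+1)*(2*K-3) + e - 6*W)"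
    using h1 h2 h3 h4 by algebra
  hence "K^2 dvd a*(12 * Asum a K - K*(a - a'))" by simp
  moreover have "coprime (K^2) a" using cop by (simp add: coprime_commute)
  ultimately show ?thesis by (simp add: coprime_dvd_mult_right_iff)
qed

definition cc :: "int \<Rightarrow> int \<Rightarrow> int" where
  "cc K x = (x + (if 2*x \<ge> K then 1 else 0)) mod 2"

definition Psum :: "int \<Rightarrow> int \<Rightarrow> int" where
  "Psum a K = (\<Sum>r\<in>{1..K-1}. r * cc K (a*r mod K))"

lemma cc_refl: assumes "odd K" "1 \<le> x" "x \<le> K - 1" shows "cc K (K - x) = cc K x"
proof -
  obtain m where m: "K = 2*m+1" using assms(1) by (metis oddE)
  show ?thesis
  proof (cases "x \<le> m")
    case True
    have e1: "(if K \<le> 2*(K-x) then 1 else 0) = (1::int)" "(if K \<le> 2*x then 1 else 0) = (0::int)"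
      using True m by auto
    have "cc K (K-x) = (K - x + 1) mod 2" "cc K x = (x + 0) mod 2"
      unfolding cc_def using e1 by (simp_all only:)
    moreover have "(K - x + 1) mod 2 = (x + 0) mod 2" unfolding m by presburger
    ultimately show ?thesis by simp
  next
    case False
    have e1: "(if K \<le> 2*(K-x) then 1 else 0) = (0::int)" "(if K \<le> 2*x then 1 else 0) = (1::int)"
      using False m by auto
    have "cc K (K-x) = (K - x + 0) mod 2" "cc K x = (x + 1) mod 2"
      unfolding cc_def using e1 by (simp_all only:)
    moreover have "(K - x + 0) mod 2 = (x + 1) mod 2" unfolding m by presburger
    ultimately show ?thesis by simp
  qed
qed

lemma P_val:
  fixes K a :: int assumes K: "K > 0" and o: "odd K" and cop: "coprime a K"
  shows "2 * Psum a K = K * (\<Sum>x\<in>{1..K-1}. cc K x)"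
proof -
  have b: "bij_betw (\<lambda>r. K - r) {1..K-1} {1..K-1}"
    by (rule bij_betwI[where g="\<lambda>r. K - r"]) auto
  have nz: "a*r mod K \<noteq> 0" if "r \<in> {1..K-1}" for r
  proof -
    have "a*r mod K \<in> {1..K-1}" using perm_bij[OF K cop] that by (auto simp: bij_betw_def)
    thus ?thesis by auto
  qed
  have "Psum a K = (\<Sum>r\<in>{1..K-1}. (K - r) * cc K (a*(K - r) mod K))"
    unfolding Psum_def using sum.reindex_bij_betw[OF b, of "\<lambda>r. r * cc K (a*r mod K)"] by simp
  also have "\<dots> = (\<Sum>r\<in>{1..K-1}. (K - r) * cc K (a*r mod K))"
  proof (rule sum.cong)
    fix r assume r: "r \<in> {1..K-1}"
    have "a*(K-r) mod K = (- (a*r)) mod K"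
      by (metis (no_types, lifting) add.commute diff_minus_eq_add minus_mult_right mod_mult_self2 right_diff_distrib' mult.commute uminus_add_conv_diff)
    also have "\<dots> = K - a*r mod K" using nz[OF r] by (simp add: zmod_zminus1_eq_if)
    finally have e: "a*(K-r) mod K = K - a*r mod K" .
    have "a*r mod K \<in> {1..K-1}" using perm_bij[OF K cop] r by (auto simp: bij_betw_def)
    thus "(K - r) * cc K (a*(K - r) mod K) = (K - r) * cc K (a*r mod K)"
      unfolding e using cc_refl[OF o] by auto
  qed simp
  finally have "2 * Psum a K = Psum a K + (\<Sum>r\<in>{1..K-1}. (K - r) * cc K (a*r mod K))" by simp
  also have "\<dots> = (\<Sum>r\<in>{1..K-1}. K * cc K (a*r mod K))"
    unfolding Psum_def sum.distrib[symmetric] by (rule sum.cong) (auto simp: algebra_simps)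
  also have "\<dots> = K * (\<Sum>r\<in>{1..K-1}. cc K (a*r mod K))"
    by (simp add: sum_distrib_left)
  also have "\<dots> = K * (\<Sum>x\<in>{1..K-1}. cc K x)"
    using perm_sum[OF K cop, of "cc K"] by simp
  finally show ?thesis .
qed

lemma par_term: fixes K x :: int assumes "odd K" "0 \<le> x" "x < K"
  shows "2 dvd x + (2*x) mod K - cc K x"
proof -
  obtain m where m: "K = 2*m+1" using assms(1) by (metis oddE)
  show ?thesis
  proof (cases "2*x \<ge> K")
    case True
    have "(2*x) mod K = ((2*x-K)+K) mod K" by simp
    also have "\<dots> = 2*x - K" by (simp only: mod_add_self2) (rule mod_pos_pos_trivial; use True assms in auto)
    finally have e: "(2*x) mod K = 2*x - K" .
    have c: "cc K x = (x+1) mod 2" unfolding cc_def using True by simp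
    have "2 dvd x + (2*x - K) - (x+1) mod 2" unfolding m by presburger
    thus ?thesis unfolding e c .
  next
    case False
    hence e: "(2*x) mod K = 2*x" using assms by (simp add: mod_pos_pos_trivial)
    have c: "cc K x = x mod 2" unfolding cc_def using False by simp
    have "2 dvd x + 2*x - x mod 2" by presburger
    thus ?thesis unfolding e c .
  qed
qed

lemma A_par:
  fixes K a :: int assumes K: "K > 0" and o: "odd K"
  shows "2 dvd Asum a K + Asum (2*a) K - Psum a K"
proof -
  have "Asum a K + Asum (2*a) K - Psum a K =
        (\<Sum>r\<in>{1..K-1}. r * (a*r mod K + (2*(a*r mod K)) mod K - cc K (a*r mod K)))"
    unfolding Asum_def Psum_def sum.distrib[symmetric] sum_subtractf[symmetric]
    by (rule sum.cong) (auto simp: algebra_simps mod_mult_right_eq)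
  also have "2 dvd \<dots>"
    by (rule dvd_sum, rule dvd_mult, rule par_term) (use o K in auto)
  finally show ?thesis .
qed




lemma ded_A:
  fixes K a :: int assumes K: "K > 0"
  shows "dedekind_sum a K = of_int (Asum a K) / (of_int K)^2 - (of_int K - 1)/4"
proof -
  have t: "(of_int r / of_int K :: real) * (of_int (a*r) / of_int K - of_int \<lfloor>of_int (a*r) / (of_int K :: real)\<rfloor> - 1/2)
        = of_int (r * (a*r mod K)) / (of_int K)^2 - of_int r / (2 * of_int K)" for r
  proof -
    have "of_int (a*r) = (of_int K * of_int (a*r div K) + of_int (a*r mod K) :: real)"
      by (metis of_int_add of_int_mult div_mult_mod_eq mult.commute)
    moreover have fl: "\<lfloor>of_int (a*r) / (of_int K :: real)\<rfloor> = a*r div K"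
      by (rule floor_divide_of_int_eq)
    ultimately have "of_int (a*r) / of_int K - of_int \<lfloor>of_int (a*r) / (of_int K :: real)\<rfloor>
           = (of_int (a*r mod K) / of_int K :: real)"
      using K by (simp add: field_simps)
    hence e: "of_int (a*r) / of_int K - of_int \<lfloor>of_int (a*r) / (of_int K :: real)\<rfloor> - 1/2
           = (of_int (a*r mod K) / of_int K - 1/2 :: real)" by simp
    show ?thesis unfolding e using K by (simp add: field_simps power2_eq_square)
  qed
  have "dedekind_sum a K = (\<Sum>r\<in>{1..K-1}. of_int (r * (a*r mod K)) / (of_int K)^2 - of_int r / (2 * of_int K))"
    unfolding dedekind_sum_def using t by simp
  also have "\<dots> = of_int (Asum a K) / (of_int K)^2 - of_int (\<Sum>r\<in>{1..K-1}. r) / (2 * of_int K)"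
    unfolding Asum_def by (simp add: sum_subtractf sum_divide_distrib)
  also have "of_int (\<Sum>r\<in>{1..K-1}. r) = ((of_int K - 1) * of_int K / 2 :: real)"
  proof -
    have s2: "(2::real) * of_int (\<Sum>r\<in>{1..K-1}. r) = (of_int K - 1) * of_int K"
      using arg_cong[where f="of_int :: int \<Rightarrow> real", OF sum_lin_K[OF K]] by simp
    have "of_int (\<Sum>r\<in>{1..K-1}. r) = ((2::real) * of_int (\<Sum>r\<in>{1..K-1}. r)) / 2" by simp
    also have "\<dots> = (of_int K - 1) * of_int K / 2" unfolding s2 ..
    finally show ?thesis .
  qed
  finally have f: "dedekind_sum a K = of_int (Asum a K) / (of_int K)^2 - ((of_int K - 1) * of_int K / 2) / (2 * of_int K)" .
  have "((of_int K - 1) * of_int K / 2) / (2 * of_int K) = ((of_int K - 1)/4 :: real)"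
    using K by (simp add: field_simps)
  with f show ?thesis by simp
qed

lemma sq24: fixes K :: int assumes "odd K" "\<not> 3 dvd K" shows "24 dvd K^2 - 1"
proof -
  define r where "r = K mod 24"
  define q where "q = K div 24"
  have Kq: "K = 24*q + r" unfolding q_def r_def by simp
  have "r = 1 \<or> r = 5 \<or> r = 7 \<or> r = 11 \<or> r = 13 \<or> r = 17 \<or> r = 19 \<or> r = 23"
    unfolding r_def using assms by presburger
  hence "24 dvd r^2 - 1" by (elim disjE) (simp_all add: power2_eq_square)
  moreover have "K^2 - 1 = 24*(24*q^2 + 2*q*r) + (r^2 - 1)" unfolding Kq by (simp add: power2_eq_square algebra_simps)
  ultimately show ?thesis by (metis dvd_add dvd_triv_left)
qed




lemma exp_shift: "exp (of_real pi * \<i> * (w + 2 * of_int n)) = exp (of_real pi * \<i> * w)"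
proof -
  have "of_real pi * \<i> * (w + 2 * of_int n) = of_real pi * \<i> * w + \<i> * (of_int n * (of_real pi * 2))"
    by (simp add: algebra_simps)
  thus ?thesis by (simp add: exp_add)
qed

lemma exp4: "exp (a::complex) * exp b * exp c / exp d = exp (a+b+c-d)"
  by (simp add: exp_add exp_diff)

lemma exp4': "exp (a::complex) * exp b * exp c / (exp d)^3 = exp (a+b+c-(d+d+d))"
proof -
  have "(exp d)^3 = exp (d+d+d)" by (simp only: exp_add power3_eq_cube)
  thus ?thesis by (simp only: exp_add exp_diff)
qed

lemma g1: fixes a b c d K :: real
  shows "(a/K^2 - (K-1)/4) + (b/K^2 - (K-1)/4) + (c/K^2 - (K-1)/4) - (d/K^2 - (K-1)/4) = (a+b+c-d)/K^2 - (K-1)/2"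
  by (simp add: add_divide_distrib diff_divide_distrib)

lemma g2: fixes a b c d K :: real
  shows "(a/K^2 - (K-1)/4) + (b/K^2 - (K-1)/4) + (c/K^2 - (K-1)/4) - ((d/K^2 - (K-1)/4) + (d/K^2 - (K-1)/4) + (d/K^2 - (K-1)/4)) = (a+b+c-3*d)/K^2"
  by (simp add: add_divide_distrib diff_divide_distrib)

lemma id1: fixes K h h' n S :: real assumes "K \<noteq> 0" "18*S + K*(K^2-1)*(9*h - 2*h') = 36*K^2*n"
  shows "S/K^2 - (K-1)/2 = -(-9*K + 9*K^2 + h*(-9+9*K^2) + h'*(2-2*K^2))/(18*K) + 2*n"
  using assms by (simp add: field_simps power2_eq_square) algebra

lemma id2: fixes K h h' n S :: real assumes "K \<noteq> 0" "9*S - K*(K^2-1)*(9*h + h') = 18*K^2*n"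
  shows "S/K^2 = (9*h*(K^2-1) + h'*(K^2-1))/(9*K) + 2*n"
  using assms by (simp add: field_simps power2_eq_square)

theorem lemma3p7:
  fixes k :: nat and h h' :: int
  assumes "gcd k 6 = 1"
    and "coprime h (int k)"
    and "[h * h' = -1] (mod (int k))"
    and "6 dvd h'"
  shows "(omega (6*h) (int k) * omega (2*h) (int k) * omega h (int k) / omega (3*h) (int k)
           = exp (- (2 * complex_of_real pi * \<i> / (36 * of_nat k)) *
               of_int (-9 * int k + 9 * int k^2 + h * (-9 + 9 * int k^2) + h' * (2 - 2 * int k^2))))
         \<and> (omega (3*h) (int k) * omega (2*h) (int k) * omega h (int k) / omega (6*h) (int k) ^ 3
           = exp ((2 * complex_of_real pi * \<i> / (18 * of_nat k)) *
               of_int (9 * h * (int k^2 - 1) + h' * (int k^2 - 1))))"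
proof -
  define K where "K = int k"
  have "k \<noteq> 0"
  proof
    assume "k = 0" thus False using assms(1) by simp
  qed
  hence K: "K > 0" unfolding K_def by simp
  have g: "gcd K 6 = 1" unfolding K_def using assms(1)
    by (metis gcd_int_int_eq of_nat_1 of_nat_numeral)
  hence cK6: "coprime K 6" by (simp add: coprime_iff_gcd_eq_1)
  hence cK2: "coprime K 2" and cK3: "coprime K 3"
    by (metis coprime_mult_right_iff mult_2 numeral_Bit0 numeral_times_numeral semiring_norm(12) semiring_norm(13) num_double)+
  have oK: "odd K"
  proof
    assume "even K" hence "2 dvd gcd K 6" by simp
    thus False using g by simp
  qed
  have n3K: "\<not> 3 dvd K"
  proof
    assume "3 dvd K" hence "3 dvd gcd K 6" by simp
    thus False using g by simp
  qed
  obtain m where m: "h' = 6*m" using assms(4) by (metis dvd_def)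
  have c1: "coprime h K" using assms(2) K_def by simp
  have c2: "coprime (2*h) K" using c1 cK2 by (simp add: coprime_commute)
  have c3: "coprime (3*h) K" using c1 cK3 by (simp add: coprime_commute)
  have c6: "coprime (6*h) K" using c1 cK6 by (simp add: coprime_commute)
  have cg: "[h*h' = -1] (mod K)" using assms(3) K_def by simp
  have g6: "[(6*h)*m = -1] (mod K)" using cg m by (simp add: ac_simps)
  have g2: "[(2*h)*(3*m) = -1] (mod K)" using cg m by (simp add: ac_simps)
  have g1: "[h*(6*m) = -1] (mod K)" using cg m by (simp add: ac_simps)
  have g3: "[(3*h)*(2*m) = -1] (mod K)" using cg m by (simp add: ac_simps)
  define A1 where "A1 = Asum h K"
  define A2 where "A2 = Asum (2*h) K"
  define A3 where "A3 = Asum (3*h) K"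
  define A6 where "A6 = Asum (6*h) K"
  have d6: "K^2 dvd 12*A6 - K*(6*h - m)" unfolding A6_def by (rule A_cong[OF K c6 g6])
  have d2: "K^2 dvd 12*A2 - K*(2*h - 3*m)" unfolding A2_def by (rule A_cong[OF K c2 g2])
  have d1: "K^2 dvd 12*A1 - K*(h - 6*m)" unfolding A1_def by (rule A_cong[OF K _ g1]) (use c1 in simp)
  have d3: "K^2 dvd 12*A3 - K*(3*h - 2*m)" unfolding A3_def by (rule A_cong[OF K c3 g3])
  have "2 * Psum h K = 2 * Psum (3*h) K"
    using P_val[OF K oK c1] P_val[OF K oK c3] by simp
  hence PP: "Psum h K = Psum (3*h) K" by simp
  have p1: "2 dvd A1 + A2 - Psum h K" unfolding A1_def A2_def by (rule A_par[OF K oK])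
  have p3: "2 dvd A3 + A6 - Psum (3*h) K" unfolding A3_def A6_def
    using A_par[OF K oK, of "3*h"] by (simp add: ac_simps)
  obtain u1 where u1: "A1 + A2 - Psum h K = 2*u1" using p1 by (metis dvd_def)
  obtain u3 where u3: "A3 + A6 - Psum h K = 2*u3" using p3 PP by (metis dvd_def)
  define X where "X = A6 + A2 + A1 - A3"
  define Y where "Y = A3 + A2 + A1 - 3*A6"
  have Xe: "X = 2*(u1 + u3 + Psum h K - A3)" unfolding X_def using u1 u3 by simp
  have Ye: "Y = 2*(u1 + u3 + Psum h K - 2*A6)" unfolding Y_def using u1 u3 by simp
  obtain t where t: "K^2 - 1 = 24*t" using sq24[OF oK n3K] by (metis dvd_def)
  have "coprime K (6*6)" using coprime_mult_right_iff[of K 6 6] cK6 by blast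
  hence "coprime K 36" by simp
  hence cK36: "coprime 36 (K^2)" by (simp add: coprime_commute)
  have "coprime K (2*(3*3))" using coprime_mult_right_iff[of K 2 "3*3"] coprime_mult_right_iff[of K 3 3] cK2 cK3 by blast
  hence "coprime K 18" by simp
  hence cK18: "coprime 18 (K^2)" by (simp add: coprime_commute)
  have cKK2: "coprime (K^2) 2" using cK2 by simp
  
  define T1 where "T1 = 18*X + K*(K^2-1)*(9*h - 2*h')"
  have "12*X - K*(6*h - 8*m) = (12*A6 - K*(6*h - m)) + (12*A2 - K*(2*h - 3*m)) + (12*A1 - K*(h - 6*m)) - (12*A3 - K*(3*h - 2*m))"
    unfolding X_def by (simp add: algebra_simps)
  hence "K^2 dvd 12*X - K*(6*h - 8*m)" using d6 d2 d1 d3 by (metis dvd_add dvd_diff)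
  hence "K^2 dvd 3*(12*X - K*(6*h - 8*m))" by (rule dvd_mult)
  moreover have "3*(12*X - K*(6*h - 8*m)) = 2*(18*X - K*(9*h - 12*m))" by (simp add: algebra_simps)
  ultimately have "K^2 dvd 2*(18*X - K*(9*h - 12*m))" by metis
  hence e1: "K^2 dvd 18*X - K*(9*h - 12*m)" using coprime_dvd_mult_right_iff[OF cKK2] by blast
  have "T1 = (18*X - K*(9*h - 12*m)) + K^2*(K*(9*h - 12*m))"
    unfolding T1_def m by (simp add: algebra_simps power2_eq_square)
  hence k1: "K^2 dvd T1" using e1 by simp
  have "T1 = 36*((u1 + u3 + Psum h K - A3) + K*t*(6*h - 8*m))"
    unfolding T1_def Xe t m by (simp add: algebra_simps)
  hence "36 dvd T1" by simp
  hence "36 * K^2 dvd T1" using k1 cK36 by (rule divides_mult)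
  then obtain n1 where n1: "T1 = 36*K^2*n1" by (metis dvd_def)
  
  define T2 where "T2 = 9*Y - K*(K^2-1)*(9*h + h')"
  have "12*Y + K*(12*h + 8*m) = (12*A3 - K*(3*h - 2*m)) + (12*A2 - K*(2*h - 3*m)) + (12*A1 - K*(h - 6*m)) - 3*(12*A6 - K*(6*h - m))"
    unfolding Y_def by (simp add: algebra_simps)
  hence "K^2 dvd 12*Y + K*(12*h + 8*m)" using d6 d2 d1 d3 by (metis dvd_add dvd_diff dvd_mult)
  hence "K^2 dvd 3*(12*Y + K*(12*h + 8*m))" by (rule dvd_mult)
  moreover have "3*(12*Y + K*(12*h + 8*m)) = 4*(9*Y + K*(9*h + 6*m))" by (simp add: algebra_simps)
  ultimately have "K^2 dvd 4*(9*Y + K*(9*h + 6*m))" by metis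
  moreover have c4: "coprime (K^2) 4" using cK2 by (metis coprime_power_left_iff coprime_power_right_iff power2_eq_square numeral_Bit0 mult_2 num_double numeral_times_numeral)
  ultimately have e2: "K^2 dvd 9*Y + K*(9*h + 6*m)" using coprime_dvd_mult_right_iff by blast
  have "T2 = (9*Y + K*(9*h + 6*m)) - K^2*(K*(9*h + 6*m))"
    unfolding T2_def m by (simp add: algebra_simps power2_eq_square)
  hence k2: "K^2 dvd T2" using e2 by simp
  have "T2 = 18*((u1 + u3 + Psum h K - 2*A6) - K*t*(12*h + 8*m))"
    unfolding T2_def Ye t m by (simp add: algebra_simps)
  hence "18 dvd T2" by simp
  hence "18 * K^2 dvd T2" using k2 cK18 by (rule divides_mult)
  then obtain n2 where n2: "T2 = 18*K^2*n2" by (metis dvd_def)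
  define Dr where "Dr a = of_int (Asum a K) / (of_int K)^2 - (of_int K - 1)/(4::real)" for a
  have om: "omega a (int k) = exp (complex_of_real pi * \<i> * complex_of_real (Dr a))" for a
    unfolding omega_def K_def[symmetric] ded_A[OF K] Dr_def ..
  have Kr: "(of_int K :: real) > 0" using K by simp
  define R1 where "R1 = -9 * K + 9 * K^2 + h * (-9 + 9 * K^2) + h' * (2 - 2 * K^2)"
  define R2 where "R2 = 9 * h * (K^2 - 1) + h' * (K^2 - 1)"
  have c1r: "18*(of_int A6 + of_int A2 + of_int A1 - of_int A3) + of_int K*((of_int K)^2-1)*(9* of_int h - 2* of_int h') = 36*(of_int K)^2*(of_int n1 :: real)"
    using arg_cong[where f="of_int :: int \<Rightarrow> real", OF n1] unfolding T1_def X_def by simp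
  have r1: "Dr (6*h) + Dr (2*h) + Dr h - Dr (3*h) = - of_int R1 / (18 * of_int K) + 2 * of_int n1"
  proof -
    have "Dr (6*h) + Dr (2*h) + Dr h - Dr (3*h) = (of_int A6 + of_int A2 + of_int A1 - of_int A3)/(of_int K)^2 - (of_int K - 1)/2"
      unfolding Dr_def A6_def[symmetric] A2_def[symmetric] A1_def[symmetric] A3_def[symmetric]
      by (simp add: add_divide_distrib diff_divide_distrib)
    thus ?thesis unfolding R1_def using id1[OF _ c1r] Kr by simp
  qed
  have c2r: "9*(of_int A3 + of_int A2 + of_int A1 - 3* of_int A6) - of_int K*((of_int K)^2-1)*(9* of_int h + of_int h') = 18*(of_int K)^2*(of_int n2 :: real)"
    using arg_cong[where f="of_int :: int \<Rightarrow> real", OF n2] unfolding T2_def Y_def by simp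
  have r2: "Dr (3*h) + Dr (2*h) + Dr h - (Dr (6*h) + Dr (6*h) + Dr (6*h)) = of_int R2 / (9 * of_int K) + 2 * of_int n2"
  proof -
    have "Dr (3*h) + Dr (2*h) + Dr h - (Dr (6*h) + Dr (6*h) + Dr (6*h)) = (of_int A3 + of_int A2 + of_int A1 - 3 * of_int A6)/(of_int K)^2"
      unfolding Dr_def A6_def[symmetric] A2_def[symmetric] A1_def[symmetric] A3_def[symmetric]
      by (simp add: add_divide_distrib diff_divide_distrib)
    thus ?thesis unfolding R2_def using id2[OF _ c2r] Kr by simp
  qed
  have L1: "omega (6*h) (int k) * omega (2*h) (int k) * omega h (int k) / omega (3*h) (int k)
      = exp (complex_of_real pi * \<i> * complex_of_real (Dr (6*h) + Dr (2*h) + Dr h - Dr (3*h)))"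
    unfolding om exp4 by (simp add: algebra_simps)
  also have "\<dots> = exp (complex_of_real pi * \<i> * (- of_int R1 / (18 * of_int K) + 2 * of_int n1))"
    unfolding r1 by simp
  also have "\<dots> = exp (complex_of_real pi * \<i> * (- of_int R1 / (18 * of_int K)))"
    by (rule exp_shift)
  also have "\<dots> = exp (- (2 * complex_of_real pi * \<i> / (36 * of_nat k)) *
               of_int (-9 * int k + 9 * int k^2 + h * (-9 + 9 * int k^2) + h' * (2 - 2 * int k^2)))"
  proof (rule arg_cong[where f=exp])
    have kc: "(of_nat k :: complex) \<noteq> 0" using K K_def by simp
    show "complex_of_real pi * \<i> * (- of_int R1 / (18 * of_int K)) = - (2 * complex_of_real pi * \<i> / (36 * of_nat k)) *
               of_int (-9 * int k + 9 * int k^2 + h * (-9 + 9 * int k^2) + h' * (2 - 2 * int k^2))"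
      unfolding R1_def K_def using kc by (simp add: field_simps)
  qed
  finally have P1: "omega (6*h) (int k) * omega (2*h) (int k) * omega h (int k) / omega (3*h) (int k)
           = exp (- (2 * complex_of_real pi * \<i> / (36 * of_nat k)) *
               of_int (-9 * int k + 9 * int k^2 + h * (-9 + 9 * int k^2) + h' * (2 - 2 * int k^2)))" .
  have "omega (3*h) (int k) * omega (2*h) (int k) * omega h (int k) / omega (6*h) (int k) ^ 3
      = exp (complex_of_real pi * \<i> * complex_of_real (Dr (3*h) + Dr (2*h) + Dr h - (Dr (6*h) + Dr (6*h) + Dr (6*h))))"
    unfolding om exp4' by (simp add: algebra_simps)
  also have "\<dots> = exp (complex_of_real pi * \<i> * (of_int R2 / (9 * of_int K) + 2 * of_int n2))"
    unfolding r2 by simp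
  also have "\<dots> = exp (complex_of_real pi * \<i> * (of_int R2 / (9 * of_int K)))"
    by (rule exp_shift)
  also have "\<dots> = exp ((2 * complex_of_real pi * \<i> / (18 * of_nat k)) *
               of_int (9 * h * (int k^2 - 1) + h' * (int k^2 - 1)))"
    unfolding R2_def K_def by (simp add: field_simps)
  finally show ?thesis using P1 by simp
qed


end
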